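(* For every real $u>0$, $$\sum_{q\ge 1}\frac{\Lambda(q)}{q^{1+u}}=-\frac{\zeta'(1+u)}{\zeta(1+u)}\le\frac{\log 2}{2^u-1}\le\frac{1}{u}.$$
   Context: $\Lambda$ is the von Mangoldt function ($\Lambda(q)=\log p$ if $q=p^j$ for a prime $p$ and $j\ge1$, and $\Lambda(q)=0$ otherwise); $\zeta$ is the Riemann zeta function. *)

theory Defs
  imports "HOL-Analysis.Analysis" "HOL-Number_Theory.Number_Theory"
begin

text \<open>Riemann zeta function on the real half-line s > 1, given by its Dirichlet series
  zeta s = sum over n >= 1 of n^(-s). (Outside s > 1 the value is irrelevant/unspecified.)\<close>
definition real_zeta :: "real \<Rightarrow> real" where
  "real_zeta s = (\<Sum>n. 1 / real (Suc n) powr s)"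

end

theory Submission
  imports Defs
begin

lemma summable_Suc_powr: "1 < a \<Longrightarrow> summable (\<lambda>n. real (Suc n) powr (-a))"
proof -
  assume "1 < a"
  hence "summable (\<lambda>n. real n powr (-a))" by (simp add: summable_real_powr_iff)
  thus ?thesis using summable_Suc_iff[of "\<lambda>n. real n powr (-a)"] by simp
qed

lemma summable_inv_powr: "1 < a \<Longrightarrow> summable (\<lambda>n. 1 / real (Suc n) powr a)"
  using summable_Suc_powr[of a] by (simp add: powr_minus divide_inverse)

lemma ln_le_powr: 
  assumes x: "1 \<le> (x::real)" and e: "0 < e"
  shows "ln x \<le> x powr e / e"
proof -
  have "e * ln x = ln (x powr e)" using x by (simp add: ln_powr)
  also have "\<dots> \<le> x powr e - 1" by (rule ln_le_minus_one) (use x in simp)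
  finally have "e * ln x \<le> x powr e" by simp
  thus ?thesis using e by (simp add: field_simps)
qed

lemma summable_ln_powr: 
  assumes a: "1 < a"
  shows "summable (\<lambda>n. ln (real (Suc n)) / real (Suc n) powr a)"
proof -
  define e where "e = (a - 1) / 2"
  have e: "e > 0" using a by (simp add: e_def)
  have sm: "summable (\<lambda>n. (1 / e) * real (Suc n) powr (-(1 + e)))"
    by (intro summable_mult summable_Suc_powr) (use e in simp)
  have bd: "norm (ln (real (Suc n)) / real (Suc n) powr a) \<le> (1 / e) * real (Suc n) powr (-(1 + e))" for n
  proof -
    have x: "real (Suc n) \<ge> 1" by simp
    have l0: "ln (real (Suc n)) \<ge> 0" by simp
    have "norm (ln (real (Suc n)) / real (Suc n) powr a) = ln (real (Suc n)) / real (Suc n) powr a"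
      using l0 by simp
    also have "\<dots> \<le> (real (Suc n) powr e / e) / real (Suc n) powr a"
      by (intro divide_right_mono ln_le_powr x e) simp
    also have "\<dots> = (1 / e) * (real (Suc n) powr e / real (Suc n) powr a)" by simp
    also have "real (Suc n) powr e / real (Suc n) powr a = real (Suc n) powr (e - a)"
      by (simp add: powr_diff)
    also have "e - a = -(1 + e)" by (simp add: e_def field_simps)
    finally show ?thesis .
  qed
  show ?thesis by (rule summable_comparison_test'[OF sm bd])
qed

lemma has_deriv_term:
  "((\<lambda>x. 1 / real (Suc n) powr x) has_field_derivative (- ln (real (Suc n)) / real (Suc n) powr x)) (at x within S)"
proof -
  have eq: "(\<lambda>x. 1 / real (Suc n) powr x) = (\<lambda>x. exp (- (x * ln (real (Suc n)))))"
    by (auto simp: powr_def exp_minus field_simps)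
  show ?thesis unfolding eq
    by (auto intro!: derivative_eq_intros simp: powr_def exp_minus field_simps)
qed

lemma zeta_deriv:
  assumes s: "1 < s"
  shows "(real_zeta has_field_derivative (\<Sum>n. - ln (real (Suc n)) / real (Suc n) powr s)) (at s)"
proof -
  define a where "a = (1 + s) / 2"
  have a: "1 < a" "a < s" using s by (auto simp: a_def)
  have uc: "uniformly_convergent_on {a..} (\<lambda>n x. \<Sum>i<n. - ln (real (Suc i)) / real (Suc i) powr x)"
  proof (rule Weierstrass_m_test')
    show "summable (\<lambda>n. ln (real (Suc n)) / real (Suc n) powr a)" by (rule summable_ln_powr) fact
    fix n x assume x: "x \<in> {a..}"
    have "real (Suc n) powr a \<le> real (Suc n) powr x" using x by (intro powr_mono) auto
    hence "ln (real (Suc n)) / real (Suc n) powr x \<le> ln (real (Suc n)) / real (Suc n) powr a"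
      by (intro divide_left_mono) auto
    thus "norm (- ln (real (Suc n)) / real (Suc n) powr x) \<le> ln (real (Suc n)) / real (Suc n) powr a"
      by simp
  qed
  have "((\<lambda>x. \<Sum>n. 1 / real (Suc n) powr x) has_field_derivative (\<Sum>n. - ln (real (Suc n)) / real (Suc n) powr s)) (at s)"
    by (rule has_field_derivative_series'(2)[OF convex_real_interval(1) has_deriv_term uc, of a])
       (use a summable_inv_powr[of a] in auto)
  moreover have "(\<lambda>x. \<Sum>n. 1 / real (Suc n) powr x) = real_zeta" by (auto simp: real_zeta_def)
  ultimately show ?thesis by simp
qed

lemma mangoldt_le_ln: "(mangoldt n :: real) \<le> ln (real n)"
proof (cases "n = 0")
  case True thus ?thesis by simp
next
  case False
  have "(mangoldt n :: real) \<le> (\<Sum>d | d dvd n. mangoldt d)"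
    by (rule member_le_sum) (use False in \<open>auto intro: mangoldt_nonneg\<close>)
  also have "\<dots> = ln (real n)" using mangoldt_sum[OF False, where 'a=real] by simp
  finally show ?thesis .
qed


lemma dir_prod_summable:
  fixes f g :: "nat \<Rightarrow> real"
  assumes f0: "\<And>n. f n \<ge> 0" and g0: "\<And>n. g n \<ge> 0"
    and sf: "summable f" and sg: "summable g"
  shows "(\<lambda>(d,m). f d * g m) summable_on UNIV"
proof (rule nonneg_bdd_above_summable_on)
  show "\<And>x. x \<in> UNIV \<Longrightarrow> 0 \<le> (case x of (d, m) \<Rightarrow> f d * g m)"
    using f0 g0 by (auto simp: split_beta)
  show "bdd_above (sum (\<lambda>(d,m). f d * g m) ` {F. F \<subseteq> UNIV \<and> finite F})"
  proof (rule bdd_aboveI2)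
    fix F :: "(nat \<times> nat) set" assume "F \<in> {F. F \<subseteq> UNIV \<and> finite F}"
    hence fin: "finite F" by auto
    obtain N1 where N1: "\<And>x. x \<in> fst ` F \<Longrightarrow> x < N1"
      using finite_nat_bounded[of "fst ` F"] fin by auto
    obtain N2 where N2: "\<And>x. x \<in> snd ` F \<Longrightarrow> x < N2"
      using finite_nat_bounded[of "snd ` F"] fin by auto
    have sub: "F \<subseteq> {..<N1} \<times> {..<N2}"
      using N1 N2 by force
    have "sum (\<lambda>(d,m). f d * g m) F \<le> sum (\<lambda>(d,m). f d * g m) ({..<N1} \<times> {..<N2})"
      by (rule sum_mono2) (use sub f0 g0 in auto)
    also have "\<dots> = (\<Sum>d<N1. f d) * (\<Sum>m<N2. g m)"
      by (simp add: sum_product sum.cartesian_product)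
    also have "\<dots> \<le> suminf f * suminf g"
      by (intro mult_mono sum_le_suminf sf sg) (auto simp: f0 g0 sum_nonneg intro!: suminf_nonneg sf sg)
    finally show "sum (\<lambda>(d,m). f d * g m) F \<le> suminf f * suminf g" .
  qed
qed

lemma dir_prod:
  fixes f g :: "nat \<Rightarrow> real"
  assumes f0: "\<And>n. f n \<ge> 0" and g0: "\<And>n. g n \<ge> 0"
    and f00: "f 0 = 0" and g00: "g 0 = 0"
    and sf: "summable f" and sg: "summable g"
  shows "(\<lambda>n. \<Sum>d | d dvd n. f d * g (n div d)) sums (suminf f * suminf g)"
proof -
  define k where "k = (\<lambda>(d::nat,m::nat). f d * g m)"
  have ks: "k summable_on UNIV" unfolding k_def by (rule dir_prod_summable) fact+
  have hf: "(f has_sum suminf f) UNIV"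
    by (rule sums_nonneg_imp_has_sum) (use sf f0 in \<open>auto simp: summable_sums\<close>)
  have hg: "(g has_sum suminf g) UNIV"
    by (rule sums_nonneg_imp_has_sum) (use sg g0 in \<open>auto simp: summable_sums\<close>)
  have hk: "(k has_sum (suminf f * suminf g)) (UNIV \<times> UNIV)"
  proof (rule has_sum_SigmaI)
    show "((\<lambda>m. k (d, m)) has_sum (f d * suminf g)) UNIV" for d
      unfolding k_def using has_sum_cmult_right[OF hg, of "f d"] by simp
    show "((\<lambda>d. f d * suminf g) has_sum (suminf f * suminf g)) UNIV"
      using has_sum_cmult_left[OF hf] by simp
    show "k summable_on UNIV \<times> UNIV" using ks by simp
  qed
  define T where "T = (SIGMA n:(UNIV::nat set). {p::nat\<times>nat. fst p * snd p = n})"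
  have bij: "bij_betw snd T (UNIV \<times> UNIV)"
    unfolding T_def by (rule bij_betwI') (auto simp: image_iff)
  have hT: "((\<lambda>x. k (snd x)) has_sum (suminf f * suminf g)) T"
    using hk has_sum_reindex_bij_betw[OF bij, of k] by simp
  have inner: "((\<lambda>p. k (snd (n, p))) has_sum (\<Sum>d | d dvd n. f d * g (n div d))) {p. fst p * snd p = n}" for n
  proof (cases "n = 0")
    case True
    have "infinite {d::nat. d dvd 0}" by (simp add: infinite_UNIV_nat)
    then have "(\<Sum>d | d dvd n. f d * g (n div d)) = 0" using True by simp
    moreover have "((\<lambda>p. k (snd (n, p))) has_sum 0) {p. fst p * snd p = n}"
      by (rule has_sum_0) (use True f00 g00 in \<open>auto simp: k_def\<close>)
    ultimately show ?thesis by simp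
  next
    case False
    have "((\<lambda>d. f d * g (n div d)) has_sum (\<Sum>d | d dvd n. f d * g (n div d))) {d. d dvd n}"
      by (rule has_sum_finiteI) (use False in auto)
    also have "?this \<longleftrightarrow> ((\<lambda>p. k (snd (n, p))) has_sum (\<Sum>d | d dvd n. f d * g (n div d))) {p. fst p * snd p = n}"
      by (rule has_sum_reindex_bij_witness[where i = fst and j = "\<lambda>d. (d, n div d)"])
         (use False in \<open>auto simp: k_def\<close>)
    finally show ?thesis .
  qed
  have "((\<lambda>n. \<Sum>d | d dvd n. f d * g (n div d)) has_sum (suminf f * suminf g)) UNIV"
    by (rule has_sum_SigmaD[OF hT[unfolded T_def]]) (use inner in auto)
  then show ?thesis by (rule has_sum_imp_sums)
qed


lemma key4:
  assumes s: "1 \<le> (s::real)"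
  shows "ln 3 / 3 powr s + ln 5 / 5 powr s \<le> ln 2 / 2 powr s + ln 4 / 4 powr s"
proof -
  define t where "t = s - 1"
  have t: "t \<ge> 0" using s by (simp add: t_def)
  define A where "A = (3/2::real) powr t"
  define B where "B = (3/4::real) powr t"
  define C where "C = (3/5::real) powr t"
  have AB: "A * B \<ge> 1"
  proof -
    have "A * B = (9/8::real) powr t" unfolding A_def B_def
      by (subst powr_mult[symmetric]) auto
    also have "\<dots> \<ge> 1" using t by (simp add: ge_one_powr_ge_zero)
    finally show ?thesis .
  qed
  have A0: "A > 0" "B > 0" by (auto simp: A_def B_def)
  have ApB: "A + B \<ge> 2"
  proof -
    have "(A + B)^2 = (A - B)^2 + 4 * (A * B)" by (simp add: power2_eq_square algebra_simps)
    moreover have "(A - B)^2 \<ge> 0" by simp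
    ultimately have "4 \<le> (A + B)^2" using AB by linarith
    hence "(2::real)^2 \<le> (A + B)^2" by simp
    thus ?thesis by (rule power2_le_imp_le) (use A0 in auto)
  qed
  have C1: "C \<le> 1" unfolding C_def using powr_mono'[of 0 t "3/5::real"] t by simp
  have C0: "C \<ge> 0" unfolding C_def by simp
  have ln4: "ln (4::real) = 2 * ln 2"
    using ln_realpow[of 2 2] by simp
  have num: "5 * ln 3 + 3 * ln 5 \<le> 15 * ln (2::real)"
  proof -
    have a1: "ln (243::real) = 5 * ln 3" using ln_realpow[of 3 5] by simp
    have a2: "ln (125::real) = 3 * ln 5" using ln_realpow[of 5 3] by simp
    have a3: "ln (32768::real) = 15 * ln 2" using ln_realpow[of 2 15] by simp
    have a4: "ln (30375::real) = ln 243 + ln 125" using ln_mult[of 243 125] by simp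
    have a5: "ln (30375::real) \<le> ln 32768" by simp
    show ?thesis using a1 a2 a3 a4 a5 by linarith
  qed
  have ps: "3 powr s = 3 * 3 powr t" "2 powr s = 2 * 2 powr t" "4 powr s = 4 * 4 powr t"
      "5 powr s = 5 * (5::real) powr t"
    by (simp_all add: t_def powr_diff)
  have e1: "A = 3 powr t / 2 powr t" "B = 3 powr t / 4 powr t" "C = 3 powr t / 5 powr t"
    by (simp_all add: A_def B_def C_def powr_divide)
  define P where "P = (3::real) powr t"
  have P0: "P > 0" by (simp add: P_def)
  have l0: "ln 2 > (0::real)" "ln 3 > (0::real)" "ln 5 > (0::real)" by auto
  have main: "ln 3 / 3 + ln 5 / 5 * C \<le> ln 2 / 2 * A + ln 4 / 4 * B"
  proof -
    have "ln 3 / 3 + ln 5 / 5 * C \<le> ln 3 / 3 + ln 5 / 5" using C1 l0 by simp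
    also have "\<dots> \<le> ln 2 / 2 * 2" using num by simp
    also have "\<dots> \<le> ln 2 / 2 * (A + B)" using ApB l0 by (intro mult_left_mono) auto
    also have "\<dots> = ln 2 / 2 * A + ln 4 / 4 * B" by (simp add: ln4 algebra_simps)
    finally show ?thesis .
  qed
  define Q2 where "Q2 = (2::real) powr t"
  define Q4 where "Q4 = (4::real) powr t"
  define Q5 where "Q5 = (5::real) powr t"
  have Q0: "Q2 > 0" "Q4 > 0" "Q5 > 0" by (auto simp: Q2_def Q4_def Q5_def)
  have e2: "A = P / Q2" "B = P / Q4" "C = P / Q5"
    using e1 by (simp_all add: P_def Q2_def Q4_def Q5_def)
  have ps2: "3 powr s = 3 * P" "2 powr s = 2 * Q2" "4 powr s = 4 * Q4" "5 powr s = 5 * Q5"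
    using ps by (simp_all add: P_def Q2_def Q4_def Q5_def)
  have "ln 3 / 3 powr s + ln 5 / 5 powr s = (ln 3 / 3 + ln 5 / 5 * C) / P"
    unfolding ps2 e2 using P0 Q0 by (simp add: field_simps)
  also have "\<dots> \<le> (ln 2 / 2 * A + ln 4 / 4 * B) / P"
    using main P0 by (simp add: divide_right_mono)
  also have "\<dots> = ln 2 / 2 powr s + ln 4 / 4 powr s"
    unfolding ps2 e2 using P0 Q0 by (simp add: field_simps)
  finally show ?thesis .
qed

lemma ln_ge_1: "3 \<le> x \<Longrightarrow> 1 \<le> ln (x::real)"
proof -
  assume "3 \<le> x"
  have "exp (1::real) < 3" using e_less_272 by simp
  hence "exp 1 \<le> x" using \<open>3 \<le> x\<close> by simp
  thus ?thesis using ln_ge_iff[of x 1] \<open>3 \<le> x\<close> by simp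
qed

lemma step_mono:
  assumes n: "3 \<le> n" and s: "1 \<le> s"
  shows "ln (real (Suc n)) / real (Suc n) powr s \<le> ln (real n) / real n powr s"
proof -
  have n0: "real n > 0" using n by simp
  have l1: "1 \<le> ln (real n)" using ln_ge_1[of "real n"] n by simp
  have "ln (real (Suc n)) - ln (real n) = ln (real (Suc n) / real n)"
    using n0 by (simp add: ln_div)
  also have "\<dots> \<le> real (Suc n) / real n - 1"
    by (rule ln_le_minus_one) (use n0 in simp)
  also have "\<dots> = 1 / real n" using n0 by (simp add: field_simps)
  also have "\<dots> \<le> ln (real n) / real n" using l1 n0 by (simp add: divide_right_mono)
  finally have r: "ln (real (Suc n)) - ln (real n) \<le> ln (real n) / real n" .
  have r2: "ln (real (Suc n)) \<le> ln (real n) * (real (Suc n) / real n)"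
  proof -
    have "ln (real n) * (real (Suc n) / real n) = ln (real n) + ln (real n) / real n"
      using n0 by (simp add: field_simps)
    thus ?thesis using r by linarith
  qed
  have m: "real (Suc n) / real n \<le> (real (Suc n) / real n) powr s"
    using powr_mono[of 1 s "real (Suc n) / real n"] s n0 by simp
  have r3: "ln (real (Suc n)) \<le> ln (real n) * (real (Suc n) powr s / real n powr s)"
    using r2 mult_left_mono[OF m, of "ln (real n)"] l1 powr_divide[of "real (Suc n)" "real n" s] n0
    by simp
  have p1: "real (Suc n) powr s > 0" "real n powr s > 0" using n0 by auto
  have r4: "ln (real (Suc n)) * real n powr s \<le> ln (real n) * real (Suc n) powr s"
    using mult_right_mono[OF r3, of "real n powr s"] p1 by simp
  show ?thesis using r4 p1 by (simp add: divide_simps)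
qed



theorem lemma3p2:
  fixes u :: real
  assumes "u > 0"
  shows "(\<lambda>q. mangoldt (Suc q) / real (Suc q) powr (1 + u)) sums
           (- deriv real_zeta (1 + u) / real_zeta (1 + u))
       \<and> - deriv real_zeta (1 + u) / real_zeta (1 + u) \<le> ln 2 / (2 powr u - 1)
       \<and> ln 2 / (2 powr u - 1) \<le> 1 / u"
proof -
  define s where "s = 1 + u"
  have s1: "1 < s" using assms by (simp add: s_def)
  define f where "f d = (mangoldt d :: real) / real d powr s" for d
  define g where "g m = 1 / real m powr s" for m
  define h where "h n = ln (real n) / real n powr s" for n
  have f00: "f 0 = 0" and g00: "g 0 = 0" and h00: "h 0 = 0" by (simp_all add: f_def g_def h_def)
  have f0: "f n \<ge> 0" for n by (simp add: f_def mangoldt_nonneg)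
  have g0: "g n \<ge> 0" for n by (simp add: g_def)
  have h0: "h n \<ge> 0" for n by (cases n) (simp_all add: h_def)
  have sg: "summable g"
    using summable_inv_powr[OF s1] summable_Suc_iff[of g] by (simp add: g_def)
  have sh: "summable h"
    using summable_ln_powr[OF s1] summable_Suc_iff[of h] by (simp add: h_def)
  have sf: "summable f"
  proof (rule summable_comparison_test'[OF sh])
    fix n :: nat
    show "norm (f n) \<le> h n" using f0[of n] mangoldt_le_ln[of n]
      by (simp add: f_def h_def divide_right_mono)
  qed
  define F where "F = suminf f"
  define G where "G = suminf g"
  define L where "L = suminf h"
  have zG: "real_zeta s = G"
    using suminf_split_head[OF sg] by (simp add: real_zeta_def G_def g_def)
  have dL: "deriv real_zeta s = - L"
  proof -
    have "deriv real_zeta s = (\<Sum>n. - ln (real (Suc n)) / real (Suc n) powr s)"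
      by (rule DERIV_imp_deriv[OF zeta_deriv[OF s1]])
    also have "\<dots> = - (\<Sum>n. h (Suc n))"
      using suminf_minus[OF summable_ln_powr[OF s1]] by (simp add: h_def)
    also have "(\<Sum>n. h (Suc n)) = L" using suminf_split_head[OF sh] by (simp add: L_def h00)
    finally show ?thesis .
  qed
  have G1: "G \<ge> 1"
  proof -
    have "sum g {..<2} \<le> G" unfolding G_def by (rule sum_le_suminf[OF sg]) (auto simp: g0)
    thus ?thesis by (simp add: g_def numeral_2_eq_2)
  qed
  have conv: "(\<Sum>d | d dvd n. f d * g (n div d)) = h n" for n
  proof (cases "n = 0")
    case True
    have "infinite {d::nat. d dvd 0}" by (simp add: infinite_UNIV_nat)
    thus ?thesis using True by (simp add: h00)
  next
    case False
    have "(\<Sum>d | d dvd n. f d * g (n div d)) = (\<Sum>d | d dvd n. mangoldt d / real n powr s)"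
    proof (rule sum.cong[OF refl])
      fix d assume "d \<in> {d. d dvd n}"
      hence dn: "d dvd n" by simp
      hence d0: "d > 0" using False by (auto intro: Nat.gr0I)
      have nd: "real d * real (n div d) = real n" using dn by (metis dvd_mult_div_cancel of_nat_mult)
      have "real d powr s * real (n div d) powr s = real n powr s"
        using nd by (metis of_nat_0_le_iff powr_mult)
      thus "f d * g (n div d) = mangoldt d / real n powr s"
        by (simp add: f_def g_def field_simps)
    qed
    also have "\<dots> = (\<Sum>d | d dvd n. mangoldt d) / real n powr s"
      by (simp add: sum_divide_distrib)
    also have "\<dots> = h n" using mangoldt_sum[OF False, where 'a=real] by (simp add: h_def)
    finally show ?thesis .
  qed
  have LFG: "L = F * G"
  proof -
    have "(\<lambda>n. \<Sum>d | d dvd n. f d * g (n div d)) sums (F * G)"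
      unfolding F_def G_def by (rule dir_prod[OF f0 g0 f00 g00 sf sg])
    hence "h sums (F * G)" by (simp add: conv)
    thus ?thesis unfolding L_def by (simp add: sums_iff)
  qed
  have FL: "F = L / G" using LFG G1 by simp
  have ser: "(\<lambda>q. mangoldt (Suc q) / real (Suc q) powr (1 + u)) sums
           (- deriv real_zeta (1 + u) / real_zeta (1 + u))"
  proof -
    have "f sums F" using sf by (simp add: F_def summable_sums)
    hence "(\<lambda>q. f (Suc q)) sums F" using sums_Suc_iff[of f F] by (simp add: f00)
    moreover have "- deriv real_zeta (1 + u) / real_zeta (1 + u) = F"
      using dL zG FL by (simp add: s_def)
    ultimately show ?thesis by (simp add: f_def s_def)
  qed
  have heven: "h (2 * k) = 2 powr (- s) * (ln 2 * g k + h k)" for k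
  proof (cases "k = 0")
    case True thus ?thesis by (simp add: h00 g00)
  next
    case False
    hence k0: "real k > 0" by simp
    have "h (2 * k) = ln (2 * real k) / (2 powr s * real k powr s)"
      by (simp add: h_def powr_mult)
    also have "\<dots> = 2 powr (- s) * (ln 2 * g k + h k)"
      using k0 by (simp add: ln_mult g_def h_def powr_minus field_simps)
    finally show ?thesis .
  qed
  define E where "E = 2 powr (- s) * (ln 2 * G + L)"
  have sE: "(\<lambda>k. h (2 * k)) sums E"
  proof -
    have "(\<lambda>k. ln 2 * g k + h k) sums (ln 2 * G + L)"
      by (intro sums_add sums_mult) (use sg sh in \<open>simp_all add: G_def L_def summable_sums\<close>)
    hence "(\<lambda>k. 2 powr (- s) * (ln 2 * g k + h k)) sums E"
      unfolding E_def by (rule sums_mult)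
    thus ?thesis by (simp add: heven)
  qed
  have sP: "(\<lambda>k. h (2 * k) + h (2 * k + 1)) sums L"
  proof -
    have "(\<lambda>n. sum h {n * 2..<n * 2 + 2}) sums L"
      by (rule sums_group) (use sh in \<open>simp_all add: L_def summable_sums\<close>)
    moreover have "sum h {n * 2..<n * 2 + 2} = h (2 * n) + h (2 * n + 1)" for n
      by (simp add: numeral_2_eq_2 mult.commute)
    ultimately show ?thesis by simp
  qed
  define b where "b k = h (2 * k) - h (2 * k + 1)" for k
  have sb: "b sums (2 * E - L)"
  proof -
    have "(\<lambda>k. 2 * h (2 * k) - (h (2 * k) + h (2 * k + 1))) sums (2 * E - L)"
      by (intro sums_diff sums_mult sE sP)
    moreover have "b = (\<lambda>k. 2 * h (2 * k) - (h (2 * k) + h (2 * k + 1)))"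
      by (auto simp: b_def fun_eq_iff)
    ultimately show ?thesis by simp
  qed
  have b0: "b 0 = 0" by (simp add: b_def h_def)
  have b12: "b 1 + b 2 \<ge> 0"
  proof -
    have "ln 3 / 3 powr s + ln 5 / 5 powr s \<le> ln 2 / 2 powr s + ln 4 / 4 powr s"
      by (rule key4) (use s1 in simp)
    thus ?thesis by (simp add: b_def h_def)
  qed
  have b3: "b (n + 3) \<ge> 0" for n
  proof -
    have "h (Suc (2 * n + 6)) \<le> h (2 * n + 6)"
      unfolding h_def by (rule step_mono) (use s1 in auto)
    thus ?thesis by (simp add: b_def algebra_simps)
  qed
  have bsum: "suminf b \<ge> 0"
  proof -
    have smb: "summable b" using sb by (simp add: sums_iff)
    have "suminf b = (\<Sum>n. b (n + 3)) + (\<Sum>i<3. b i)"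
      by (rule suminf_split_initial_segment[OF smb])
    moreover have "(\<Sum>n. b (n + 3)) \<ge> 0"
      by (intro suminf_nonneg summable_ignore_initial_segment smb b3)
    moreover have "(\<Sum>i<3. b i) = b 0 + b 1 + b 2" by (simp add: numeral_3_eq_3 numeral_2_eq_2)
    ultimately show ?thesis using b0 b12 by simp
  qed
  have LE: "L \<le> 2 * E" using bsum sb by (simp add: sums_iff)
  have pu: "2 powr s = 2 * 2 powr u" by (simp add: s_def powr_add)
  have u1: "2 powr u - 1 \<ge> u * ln 2"
  proof -
    have "2 powr u = exp (u * ln 2)" by (simp add: powr_def)
    thus ?thesis using exp_ge_add_one_self[of "u * ln 2"] by linarith
  qed
  have upos: "u * ln 2 > 0" using assms by simp
  have key: "L * (2 powr u - 1) \<le> ln 2 * G"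
  proof -
    have "2 powr s * E = ln 2 * G + L"
      by (simp add: E_def powr_minus)
    hence "L * (2 powr u - 1) - ln 2 * G = 2 powr u * (L - 2 * E)"
      using pu by (simp add: algebra_simps)
    also have "\<dots> \<le> 0" using LE by (simp add: mult_nonneg_nonpos)
    finally show ?thesis by simp
  qed
  have ineq1: "F \<le> ln 2 / (2 powr u - 1)"
    using key G1 u1 upos by (simp add: FL divide_simps)
  have ineq2: "ln 2 / (2 powr u - 1) \<le> 1 / u"
  proof -
    have "ln 2 / (2 powr u - 1) \<le> ln 2 / (u * ln 2)"
      by (rule divide_left_mono) (use u1 upos in auto)
    also have "\<dots> = 1 / u" by simp
    finally show ?thesis .
  qed
  have "- deriv real_zeta (1 + u) / real_zeta (1 + u) = F"
    using dL zG FL by (simp add: s_def)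
  thus ?thesis using ser ineq1 ineq2 by simp
qed

end
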